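(* For every integer $n\geqslant1$, \[ \sum_{k=0}^{n-1}(-1)^{n+k}\frac{(2n+1)(2k+1)}{(n-k)^{2}(n+k+1)^{2}} =-\frac{\pi^{2}}{12}+\psi_{1}(2n+1)-\frac{1}{2}\psi_{1}(n+1). \]
   Context: $\psi_1$ is the trigamma function, $\psi_1(z)=\frac{\mathrm{d}^2}{\mathrm{d}z^2}\ln\Gamma(z)$. *)

theory Defs
  imports "HOL-Analysis.Analysis"
begin

end

theory Submission
  imports Defs
begin

lemma psi1_one: "Polygamma 1 (1::real) = pi^2/6"
proof -
  have "(\<lambda>k. inverse ((1 + of_nat k)^Suc 1)) sums ((-1) ^ Suc 1 * Polygamma 1 (1::real) / fact 1)"
    by (rule Polygamma_LIMSEQ) auto
  hence a: "(\<lambda>k::nat. 1 / (real k + 1)^2) sums (Polygamma 1 (1::real))"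
    by (simp add: inverse_eq_divide add.commute power2_eq_square)
  have b: "(\<lambda>k::nat. 1 / (real k + 1)^2) sums (pi^2/6)"
    using inverse_squares_sums by (simp add: add.commute)
  show ?thesis using sums_unique2[OF a b] .
qed

lemma psi1_nat: "Polygamma 1 (real m + 1) = pi^2/6 - (\<Sum>k<m. 1 / (real k + 1)^2)"
proof -
  have "Polygamma 1 (1 + of_nat m) = Polygamma 1 (1::real) + (-1) ^ 1 * fact 1 * (\<Sum>k<m. 1 / (1 + of_nat k) ^ Suc 1)"
    by (rule Polygamma_plus_of_nat) auto
  thus ?thesis using psi1_one by (simp add: add.commute power2_eq_square)
qed

definition ff :: "nat \<Rightarrow> real" where "ff j = (-1::real)^(j+1) / (real j + 1)^2"

lemma split_sum: fixes m n :: nat shows "(\<Sum>k<n+m. g k) = (\<Sum>k<n. g k) + (\<Sum>k<m. (g (n+k)::real))"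
  by (induction m) auto

lemma alt_sum: "(\<Sum>k<2*n. ff k) = - (\<Sum>k<2*n. 1 / (real k + 1)^2) + (1/2) * (\<Sum>k<n. 1 / (real k + 1)^2)"
proof (induction n)
  case 0 then show ?case by simp
next
  case (Suc n)
  have e: "2 * Suc n = Suc (Suc (2*n))" by simp
  have "(\<Sum>k<2*Suc n. ff k) = (\<Sum>k<2*n. ff k) + ff (2*n) + ff (Suc (2*n))"
    unfolding e by simp
  moreover have "(\<Sum>k<2*Suc n. 1 / (real k + 1)^2) = (\<Sum>k<2*n. 1 / (real k + 1)^2) + 1/(2*real n+1)^2 + 1/(2*real n+2)^2"
    unfolding e by (simp add: add.commute add.left_commute)
  moreover have "ff (2*n) = - 1/(2*real n+1)^2" "ff (Suc (2*n)) = 1/(2*real n+2)^2"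
    by (simp_all add: ff_def add.commute add.left_commute)
  moreover have "(1::real)/(2*real n+2)^2 = - 1/(2*real n+2)^2 + (1/2) * (1/(real n+1)^2)"
  proof -
    have eq: "(2*real n+2)^2 = 4*(real n+1)^2" by (simp add: power2_eq_square algebra_simps)
    have X: "\<And>x::real. x > 0 \<Longrightarrow> 1/(4*x) = -1/(4*x) + 1/2*(1/x)" by (simp add: field_simps)
    show ?thesis unfolding eq by (rule X) simp
  qed
  moreover have "(\<Sum>k<Suc n. 1 / (real k + 1)^2) = (\<Sum>k<n. 1 / (real k + 1)^2) + 1/(real n+1)^2"
    by simp
  ultimately show ?case using Suc.IH by linarith
qed

theorem mainTheorem8:
  fixes n :: nat
  assumes "n \<ge> 1"
  shows "(\<Sum>k=0..n-1. (-1::real)^(n+k) * ((2*real n+1)*(2*real k+1))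
            / ((real n - real k)^2 * (real n + real k + 1)^2))
         = - (pi^2 / 12) + Polygamma 1 (2*real n + 1) - (1/2) * Polygamma 1 (real n + 1)"
proof -
  have iv: "{0..n-1} = {..<n}" using assms by auto
  have trm: "(-1::real)^(n+k) * ((2*real n+1)*(2*real k+1))
            / ((real n - real k)^2 * (real n + real k + 1)^2) = ff (n - Suc k) + ff (n+k)"
    if "k < n" for k
  proof -
    have p: "(-1::real)^(n+k) = (-1)^(n-k)"
    proof -
      have "n + k = (n-k) + 2*k" using that by simp
      hence "(-1::real)^(n+k) = (-1)^((n-k) + 2*k)" by (rule arg_cong)
      also have "\<dots> = (-1)^(n-k)" by (simp add: power_add power_mult)
      finally show ?thesis .
    qed
    have r: "real (n - Suc k) + 1 = real n - real k" using that by (simp add: of_nat_diff)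
    have q: "n - Suc k + 1 = n - k" using that by simp
    have f1: "ff (n - Suc k) = (-1)^(n+k) / (real n - real k)^2"
      unfolding ff_def q r p ..
    have f2: "ff (n + k) = - ((-1)^(n+k) / (real n + real k + 1)^2)"
      unfolding ff_def by simp
    have nz: "real n - real k \<noteq> 0" using that by simp
    have nz2: "real n + real k + 1 \<noteq> 0" by (simp add: add_nonneg_pos)
    have gen: "\<And>sg a b::real. a \<noteq> 0 \<Longrightarrow> b \<noteq> 0 \<Longrightarrow>
       sg * ((a+b)*(b-a)) / (a^2*b^2) = sg / a^2 + - (sg / b^2)"
      by (simp add: field_simps power2_eq_square)
    have "(2*real n+1)*(2*real k+1) = ((real n - real k) + (real n + real k + 1)) * ((real n + real k + 1) - (real n - real k))"
      by (simp add: algebra_simps)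
    thus ?thesis unfolding f1 f2 using gen[OF nz nz2, of "(-1)^(n+k)"] by simp
  qed
  have "(\<Sum>k=0..n-1. (-1::real)^(n+k) * ((2*real n+1)*(2*real k+1))
            / ((real n - real k)^2 * (real n + real k + 1)^2))
        = (\<Sum>k<n. ff (n - Suc k)) + (\<Sum>k<n. ff (n+k))"
    unfolding iv by (simp add: trm sum.distrib)
  also have "(\<Sum>k<n. ff (n - Suc k)) = (\<Sum>k<n. ff k)" by (rule sum.nat_diff_reindex)
  also have "(\<Sum>k<n. ff k) + (\<Sum>k<n. ff (n+k)) = (\<Sum>k<n+n. ff k)" by (rule split_sum[symmetric])
  also have "n + n = 2*n" by simp
  also note alt_sum
  finally have L: "(\<Sum>k=0..n-1. (-1::real)^(n+k) * ((2*real n+1)*(2*real k+1))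
            / ((real n - real k)^2 * (real n + real k + 1)^2))
      = - (\<Sum>k<2*n. 1 / (real k + 1)^2) + (1/2) * (\<Sum>k<n. 1 / (real k + 1)^2)" .
  have "Polygamma 1 (2*real n + 1) = pi^2/6 - (\<Sum>k<2*n. 1 / (real k + 1)^2)"
    using psi1_nat[of "2*n"] by simp
  thus ?thesis using L psi1_nat[of n] by linarith
qed

end
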